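(* Let $L>1$ and consider widths $[N_1,\dots,N_L]=[D,D,\dots,D,N_L]$. The union over $N_L\in\mathbb{N}_{>0}$ of the sets of sampled ReLU networks $\Phi\colon\mathcal{X}\to\mathbb{R}^{N_{L+1}}$ with $L$ hidden layers of widths $[D,\dots,D,N_L]$ is dense in $C(\mathcal{X},\mathbb{R}^{N_{L+1}})$ with respect to the uniform norm.
   Context: Input space: Fix $D\ge1$, Euclidean norm and inner product on $\mathbb{R}^D$. For $A\subseteq\mathbb{R}^D$ let $d(z,A)=\inf_{a\in A}\|z-a\|$, $\mathrm{Med}(A)=\{z:\exists p\neq q\in A,\ \|p-z\|=\|q-z\|=d(z,A)\}$, reach $\tau_A=\inf_{a\in A}d(a,\mathrm{Med}(A))$. Let $\mathcal{X}'\subset\mathbb{R}^D$ be nonempty compact with $\tau_{\mathcal{X}'}>0$, fix $0<\epsilon_I<\min\{\tau_{\mathcal{X}'},1\}$, and $\mathcal{X}=\{x:d(x,\mathcal{X}')\le\epsilon_I\}$. Networks: with $\phi(t)=\max\{t,0\}$, $N_0=D$, a network computes $\Phi^{(0)}(x)=x$, $\Phi^{(l)}(x)=\phi(W_l\Phi^{(l-1)}(x)-b_l)$ for $l=1,\dots,L$, $\Phi(x)=W_{L+1}\Phi^{(L)}(x)-b_{L+1}$; $w_{l,i},b_{l,i}$ denote the $i$-th row of $W_l$ and entry of $b_l$. It is a sampled network if for all $l\le L$, $i\le N_l$ there are $x^{(1)}_{0,i},x^{(2)}_{0,i}\in\mathcal{X}$ such that $x^{(j)}_{l-1,i}=\Phi^{(l-1)}(x^{(j)}_{0,i})$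 are distinct and $w_{l,i}=\frac{x^{(2)}_{l-1,i}-x^{(1)}_{l-1,i}}{\|x^{(2)}_{l-1,i}-x^{(1)}_{l-1,i}\|^2}$, $b_{l,i}=\langle w_{l,i},x^{(1)}_{l-1,i}\rangle$; $W_{L+1},b_{L+1}$ are unrestricted. *)

theory Defs
  imports "HOL-Analysis.Analysis"
begin

text \<open>Medial axis and reach (reach is extended-real valued; the reach is +infinity
  when the medial axis is empty, matching d(a, empty) = +infinity).\<close>

definition medial_axis :: "('a::real_normed_vector) set \<Rightarrow> 'a set" where
  "medial_axis A = {z. \<exists>p\<in>A. \<exists>q\<in>A. p \<noteq> q \<and>
      dist p z = infdist z A \<and> dist q z = infdist z A}"

definition reach :: "('a::real_normed_vector) set \<Rightarrow> ereal" where
  "reach A = (INF a\<in>A. INF z\<in>medial_axis A. ereal (dist a z))"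

definition relu :: "real \<Rightarrow> real" where
  "relu t = max t 0"

text \<open>Hidden layers 1..L-1 of width D (neurons indexed by the index type 'n of R^D).
  Layer l, neuron i has weight row w l i and bias b l i.\<close>

fun hidden :: "(nat \<Rightarrow> 'n \<Rightarrow> real^'n) \<Rightarrow> (nat \<Rightarrow> 'n \<Rightarrow> real) \<Rightarrow> nat \<Rightarrow>
    real^'n \<Rightarrow> real^'n" where
  "hidden w b 0 x = x"
| "hidden w b (Suc l) x = (\<chi> i. relu (w (Suc l) i \<bullet> hidden w b l x - b (Suc l) i))"

text \<open>Full network with L hidden layers: layers 1..L-1 of width D, layer L of width NL
  (weights wL i, biases bL i, i < NL), and an unrestricted affine output layer
  W_{L+1} (columns c i) and bias d.\<close>

definition net :: "nat \<Rightarrow> (nat \<Rightarrow> 'n \<Rightarrow> real^'n) \<Rightarrow> (nat \<Rightarrow> 'n \<Rightarrow> real) \<Rightarrow>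
    nat \<Rightarrow> (nat \<Rightarrow> real^'n) \<Rightarrow> (nat \<Rightarrow> real) \<Rightarrow> (nat \<Rightarrow> real^'m) \<Rightarrow> real^'m \<Rightarrow>
    real^'n \<Rightarrow> real^'m" where
  "net L w b NL wL bL c d x =
     (\<Sum>i<NL. relu (wL i \<bullet> hidden w b (L - 1) x - bL i) *\<^sub>R c i) - d"

definition sampled_neuron :: "real^'n \<Rightarrow> real^'n \<Rightarrow> real^'n \<Rightarrow> real \<Rightarrow> bool" where
  "sampled_neuron p q v beta \<longleftrightarrow>
     p \<noteq> q \<and> v = (1 / (norm (q - p))\<^sup>2) *\<^sub>R (q - p) \<and> beta = v \<bullet> p"

definition sampled_net :: "(real^'n) set \<Rightarrow> nat \<Rightarrow> (nat \<Rightarrow> 'n \<Rightarrow> real^'n) \<Rightarrow>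
    (nat \<Rightarrow> 'n \<Rightarrow> real) \<Rightarrow> nat \<Rightarrow> (nat \<Rightarrow> real^'n) \<Rightarrow> (nat \<Rightarrow> real) \<Rightarrow> bool" where
  "sampled_net X L w b NL wL bL \<longleftrightarrow>
     (\<forall>l\<in>{1..<L}. \<forall>i. \<exists>x1\<in>X. \<exists>x2\<in>X.
        sampled_neuron (hidden w b (l - 1) x1) (hidden w b (l - 1) x2) (w l i) (b l i)) \<and>
     (\<forall>i<NL. \<exists>x1\<in>X. \<exists>x2\<in>X.
        sampled_neuron (hidden w b (L - 1) x1) (hidden w b (L - 1) x2) (wL i) (bL i))"

end

theory Submission
  imports Defs
begin

definition plin :: "real set \<Rightarrow> (real \<Rightarrow> real) \<Rightarrow> bool" where
  "plin T P \<longleftrightarrow> (\<exists>ps c. set (map snd ps) \<subseteq> T \<and>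
      P = (\<lambda>s. c + sum_list (map (\<lambda>(a,u). a * relu (s - u)) ps)))"

lemma plin_const: "plin T (\<lambda>s. c)"
  unfolding plin_def by (rule exI[of _ "[]"]) auto

lemma plin_add: "plin T P \<Longrightarrow> u \<in> T \<Longrightarrow> plin T (\<lambda>s. P s + a * relu (s - u))"
  unfolding plin_def
  apply clarify
  subgoal for ps c by (rule exI[of _ "ps @ [(a,u)]"], rule exI[of _ c]) (auto simp: algebra_simps)
  done

lemma lip_glue:
  fixes f :: "real \<Rightarrow> real"
  assumes "\<And>s r. s \<le> c \<Longrightarrow> r \<le> c \<Longrightarrow> \<bar>f s - f r\<bar> \<le> M * \<bar>s - r\<bar>"
      and "\<And>s r. s \<ge> c \<Longrightarrow> r \<ge> c \<Longrightarrow> \<bar>f s - f r\<bar> \<le> M * \<bar>s - r\<bar>"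
  shows "\<bar>f s - f r\<bar> \<le> M * \<bar>s - r\<bar>"
proof -
  have key: "\<bar>f s - f r\<bar> \<le> M * \<bar>s - r\<bar>" if "s \<le> c" "c \<le> r" for s r
  proof -
    have "\<bar>f s - f r\<bar> \<le> \<bar>f s - f c\<bar> + \<bar>f c - f r\<bar>" by linarith
    also have "\<dots> \<le> M * \<bar>s - c\<bar> + M * \<bar>c - r\<bar>"
      using assms(1)[of s c] assms(2)[of c r] that by auto
    also have "\<dots> = M * \<bar>s - r\<bar>" using that by (simp add: abs_if algebra_simps)
    finally show ?thesis .
  qed
  show ?thesis
  proof (cases "s \<le> c")
    case True
    then show ?thesis
    proof (cases "r \<le> c")
      case False then show ?thesis using key[of s r] True by auto
    qed (use assms True in auto)
  next
    case False
    then show ?thesis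
    proof (cases "r \<le> c")
      case True then show ?thesis using key[of r s] False by (auto simp: abs_minus_commute)
    qed (use assms False in auto)
  qed
qed

lemma le_last:
  fixes xs :: "real list"
  assumes "sorted_wrt (<) xs" "t \<in> set xs"
  shows "t \<le> last xs"
proof -
  have ne: "xs \<noteq> []" using assms by auto
  have "xs = butlast xs @ [last xs]" using ne by simp
  then have "sorted_wrt (<) (butlast xs @ [last xs])" using assms(1) by simp
  moreover have "t \<in> set (butlast xs) \<or> t = last xs"
    using assms(2) \<open>xs = butlast xs @ [last xs]\<close> by (metis Un_iff empty_iff empty_set set_ConsD set_append)
  ultimately show ?thesis by (auto simp: sorted_wrt_append)
qed

lemma pl_interp:
  fixes \<phi> :: "real \<Rightarrow> real"
  assumes "sorted_wrt (<) ts" "ts \<noteq> []" "M \<ge> 0"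
    and "\<forall>a\<in>set ts. \<forall>b\<in>set ts. \<bar>\<phi> a - \<phi> b\<bar> \<le> M * \<bar>a - b\<bar>"
  shows "\<exists>P. plin (set ts) P \<and> (\<forall>t\<in>set ts. P t = \<phi> t) \<and>
     (\<forall>s r. \<bar>P s - P r\<bar> \<le> M * \<bar>s - r\<bar>) \<and> (\<forall>s\<ge>last ts. P s = \<phi> (last ts))"
  using assms
proof (induction ts rule: rev_induct)
  case Nil then show ?case by simp
next
  case (snoc x xs)
  show ?case
  proof (cases "xs = []")
    case True
    then show ?thesis using snoc.prems
      by (intro exI[of _ "\<lambda>s. \<phi> x"]) (auto simp: plin_const)
  next
    case False
    define l where "l = last xs"
    have lxs: "l \<in> set xs" using False l_def by auto
    have lx: "l < x" using snoc.prems(1) lxs by (auto simp: sorted_wrt_append)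
    have "\<exists>P. plin (set xs) P \<and> (\<forall>t\<in>set xs. P t = \<phi> t) \<and>
     (\<forall>s r. \<bar>P s - P r\<bar> \<le> M * \<bar>s - r\<bar>) \<and> (\<forall>s\<ge>last xs. P s = \<phi> (last xs))"
      using snoc.prems False by (intro snoc.IH) (auto simp: sorted_wrt_append)
    then obtain P where P: "plin (set xs) P" "\<forall>t\<in>set xs. P t = \<phi> t"
      "\<forall>s r. \<bar>P s - P r\<bar> \<le> M * \<bar>s - r\<bar>" "\<forall>s\<ge>l. P s = \<phi> l"
      unfolding l_def by blast
    define \<sigma> where "\<sigma> = (\<phi> x - \<phi> l) / (x - l)"
    have sig: "\<bar>\<sigma>\<bar> \<le> M"
    proof -
      have "\<bar>\<phi> x - \<phi> l\<bar> \<le> M * \<bar>x - l\<bar>" using snoc.prems(4) lxs by auto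
      then show ?thesis using lx by (simp add: \<sigma>_def abs_divide divide_le_eq)
    qed
    define Q where "Q = (\<lambda>s. (P s + \<sigma> * relu (s - l)) + (- \<sigma>) * relu (s - x))"
    have "plin (set (xs @ [x])) P"
      using P(1) unfolding plin_def by auto
    then have plQ: "plin (set (xs @ [x])) Q"
      unfolding Q_def using lxs by (intro plin_add) auto
    have Qle: "Q s = P s" if "s \<le> l" for s
      using that lx by (simp add: Q_def relu_def)
    have Qge: "Q s = \<phi> l + \<sigma> * (min s x - l)" if "s \<ge> l" for s
      using that lx P(4) by (simp add: Q_def relu_def min_def algebra_simps)
    have lip: "\<bar>Q s - Q r\<bar> \<le> M * \<bar>s - r\<bar>" for s r
    proof (rule lip_glue[of l])
      fix s r assume "s \<le> l" "r \<le> l"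
      then show "\<bar>Q s - Q r\<bar> \<le> M * \<bar>s - r\<bar>" using Qle P(3) by simp
    next
      fix s r assume "s \<ge> l" "r \<ge> l"
      then have "Q s - Q r = \<sigma> * (min s x - min r x)"
        using Qge[of s] Qge[of r] by (simp add: algebra_simps)
      then have "\<bar>Q s - Q r\<bar> = \<bar>\<sigma>\<bar> * \<bar>min s x - min r x\<bar>"
        by (simp add: abs_mult)
      also have "\<dots> \<le> M * \<bar>s - r\<bar>"
        using sig by (intro mult_mono) (auto simp: min_def)
      finally show "\<bar>Q s - Q r\<bar> \<le> M * \<bar>s - r\<bar>" .
    qed
    have interp: "\<forall>t\<in>set (xs @ [x]). Q t = \<phi> t"
    proof
      fix t assume "t \<in> set (xs @ [x])"
      then consider "t \<in> set xs" | "t = x" by auto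
      then show "Q t = \<phi> t"
      proof cases
        case 1
        then have "t \<le> l" using snoc.prems(1) False unfolding l_def
          by (intro le_last) (auto simp: sorted_wrt_append)
        then show ?thesis using Qle P(2) 1 by simp
      next
        case 2
        then show ?thesis using Qge[of x] lx by (simp add: \<sigma>_def)
      qed
    qed
    have tail: "\<forall>s\<ge>last (xs @ [x]). Q s = \<phi> (last (xs @ [x]))"
      using Qge lx by (auto simp: \<sigma>_def min_def)
    show ?thesis using plQ lip interp tail by blast
  qed
qed

definition neur :: "(real^'n) set \<Rightarrow> (real^'n \<Rightarrow> real^'n) \<Rightarrow> real^'n \<Rightarrow> real \<Rightarrow> bool" where
  "neur X G v \<beta> \<longleftrightarrow> (\<exists>x1\<in>X. \<exists>x2\<in>X. sampled_neuron (G x1) (G x2) v \<beta>)"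

definition netfun :: "(real^'n \<Rightarrow> real^'n) \<Rightarrow> nat \<Rightarrow> (nat \<Rightarrow> real^'n) \<Rightarrow> (nat \<Rightarrow> real)
   \<Rightarrow> (nat \<Rightarrow> 'b::real_vector) \<Rightarrow> 'b \<Rightarrow> real^'n \<Rightarrow> 'b" where
  "netfun G N V B C d x = (\<Sum>i<N. relu (V i \<bullet> G x - B i) *\<^sub>R C i) - d"

definition realz :: "(real^'n) set \<Rightarrow> (real^'n \<Rightarrow> real^'n) \<Rightarrow> (real^'n \<Rightarrow> 'b::real_vector) \<Rightarrow> bool" where
  "realz X G F \<longleftrightarrow> (\<exists>N V B C d. (\<forall>i<N. neur X G (V i) (B i)) \<and>
      (\<forall>x\<in>X. F x = netfun G N V B C d x))"

lemma sum_lessThan_add_split: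
  fixes a b :: nat and f :: "nat \<Rightarrow> 'a::comm_monoid_add"
  shows "(\<Sum>i<a+b. f i) = (\<Sum>i<a. f i) + (\<Sum>i<b. f (a+i))"
  by (induction b) (simp_all add: algebra_simps)

lemma realz_cong: "realz X G F \<Longrightarrow> (\<And>x. x \<in> X \<Longrightarrow> F x = F' x) \<Longrightarrow> realz X G F'"
  unfolding realz_def by metis

lemma realz_const: "realz X G (\<lambda>x. k)"
  unfolding realz_def netfun_def
  by (rule exI[of _ 0], rule exI, rule exI, rule exI, rule exI[of _ "-k"]) simp

lemma realz_neur: "neur X G v \<beta> \<Longrightarrow> realz X G (\<lambda>x. relu (v \<bullet> G x - \<beta>))"
  unfolding realz_def netfun_def
  by (rule exI[of _ 1], rule exI[of _ "\<lambda>_. v"], rule exI[of _ "\<lambda>_. \<beta>"],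
      rule exI[of _ "\<lambda>_. 1::real"], rule exI[of _ 0]) simp

lemma realz_lin:
  assumes "linear h" "realz X G F"
  shows "realz X G (\<lambda>x. h (F x))"
proof -
  obtain N V B C d where nd: "\<forall>i<N. neur X G (V i) (B i)" and F: "\<forall>x\<in>X. F x = netfun G N V B C d x"
    using assms(2) unfolding realz_def by blast
  show ?thesis unfolding realz_def
  proof (intro exI conjI)
    show "\<forall>i<N. neur X G (V i) (B i)" by fact
    show "\<forall>x\<in>X. h (F x) = netfun G N V B (\<lambda>i. h (C i)) (h d) x"
      using F by (simp add: netfun_def linear_diff[OF assms(1)] linear_sum[OF assms(1)]
            linear_scale[OF assms(1)])
  qed
qed

lemma realz_add:
  assumes "realz X G F1" "realz X G F2"
  shows "realz X G (\<lambda>x. F1 x + F2 x)"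
proof -
  obtain N1 V1 B1 C1 d1 where n1: "\<forall>i<N1. neur X G (V1 i) (B1 i)" and F1: "\<forall>x\<in>X. F1 x = netfun G N1 V1 B1 C1 d1 x"
    using assms(1) unfolding realz_def by blast
  obtain N2 V2 B2 C2 d2 where n2: "\<forall>i<N2. neur X G (V2 i) (B2 i)" and F2: "\<forall>x\<in>X. F2 x = netfun G N2 V2 B2 C2 d2 x"
    using assms(2) unfolding realz_def by blast
  define V where "V i = (if i < N1 then V1 i else V2 (i - N1))" for i
  define B where "B i = (if i < N1 then B1 i else B2 (i - N1))" for i
  define C where "C i = (if i < N1 then C1 i else C2 (i - N1))" for i
  show ?thesis unfolding realz_def
  proof (intro exI conjI)
    show "\<forall>i<N1+N2. neur X G (V i) (B i)"
      using n1 n2 by (auto simp: V_def B_def)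
    show "\<forall>x\<in>X. F1 x + F2 x = netfun G (N1+N2) V B C (d1 + d2) x"
      using F1 F2 by (simp add: netfun_def sum_lessThan_add_split V_def B_def C_def algebra_simps)
  qed
qed

lemma realz_sum:
  assumes "finite S" "\<And>j. j \<in> S \<Longrightarrow> realz X G (F j)"
  shows "realz X G (\<lambda>x. \<Sum>j\<in>S. F j x)"
  using assms
proof (induction S rule: finite_induct)
  case empty then show ?case using realz_const[of X G 0] by simp
next
  case (insert a S)
  then show ?case by (simp add: realz_add)
qed

lemma realz_scale: "realz X G (F :: _ \<Rightarrow> real) \<Longrightarrow> realz X G (\<lambda>x. c * F x)"
  using realz_lin[of "\<lambda>y. c * y"] by (simp add: bounded_linear.linear[OF bounded_linear_mult_right])

definition approx :: "(real^'n) set \<Rightarrow> (real^'n \<Rightarrow> real^'n) \<Rightarrow> (real^'n \<Rightarrow> real) \<Rightarrow> bool" where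
  "approx X G F \<longleftrightarrow> (\<forall>e>0. \<exists>H. realz X G H \<and> (\<forall>x\<in>X. \<bar>F x - H x\<bar> < e))"

lemma approx_add:
  assumes "approx X G F1" "approx X G F2"
  shows "approx X G (\<lambda>x. F1 x + F2 x)"
  unfolding approx_def
proof (intro allI impI)
  fix e :: real assume e: "e > 0"
  obtain H1 where H1: "realz X G H1" "\<forall>x\<in>X. \<bar>F1 x - H1 x\<bar> < e/2"
    using assms(1) e unfolding approx_def by (meson half_gt_zero)
  obtain H2 where H2: "realz X G H2" "\<forall>x\<in>X. \<bar>F2 x - H2 x\<bar> < e/2"
    using assms(2) e unfolding approx_def by (meson half_gt_zero)
  show "\<exists>H. realz X G H \<and> (\<forall>x\<in>X. \<bar>F1 x + F2 x - H x\<bar> < e)"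
  proof (intro exI[of _ "\<lambda>x. H1 x + H2 x"] conjI ballI)
    show "realz X G (\<lambda>x. H1 x + H2 x)" using H1 H2 by (simp add: realz_add)
    fix x assume "x \<in> X"
    then have "\<bar>F1 x - H1 x\<bar> < e/2" "\<bar>F2 x - H2 x\<bar> < e/2" using H1 H2 by auto
    then show "\<bar>F1 x + F2 x - (H1 x + H2 x)\<bar> < e" by linarith
  qed
qed

lemma approx_scale:
  assumes "approx X G F"
  shows "approx X G (\<lambda>x. c * F x)"
  unfolding approx_def
proof (intro allI impI)
  fix e :: real assume e: "e > 0"
  have e': "e / (\<bar>c\<bar> + 1) > 0" using e by simp
  obtain H where H: "realz X G H" "\<forall>x\<in>X. \<bar>F x - H x\<bar> < e / (\<bar>c\<bar> + 1)"
    using assms e' unfolding approx_def by blast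
  have "\<bar>c * F x - c * H x\<bar> < e" if "x \<in> X" for x
  proof -
    have "\<bar>c * F x - c * H x\<bar> = \<bar>c\<bar> * \<bar>F x - H x\<bar>" by (simp add: abs_mult[symmetric] algebra_simps)
    also have "\<dots> \<le> (\<bar>c\<bar> + 1) * \<bar>F x - H x\<bar>" by (simp add: mult_right_mono)
    also have "\<dots> < (\<bar>c\<bar> + 1) * (e / (\<bar>c\<bar> + 1))"
      using H(2) that by (intro mult_strict_left_mono) (auto simp: add_pos_nonneg)
    also have "\<dots> = e" by (simp add: add_pos_nonneg)
    finally show ?thesis .
  qed
  then show "\<exists>H. realz X G H \<and> (\<forall>x\<in>X. \<bar>c * F x - H x\<bar> < e)"
    using H by (intro exI[of _ "\<lambda>x. c * H x"]) (simp add: realz_scale)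
qed

lemma approx_realz: "realz X G F \<Longrightarrow> approx X G F"
  unfolding approx_def by (intro allI impI exI[of _ F]) simp

lemma relu_scale: "c \<ge> 0 \<Longrightarrow> relu (c * a) = c * relu a"
  by (auto simp: relu_def max_def mult_le_0_iff zero_le_mult_iff)

lemma exp_lip:
  fixes a b B :: real
  assumes "a \<le> B" "b \<le> B"
  shows "\<bar>exp a - exp b\<bar> \<le> exp B * \<bar>a - b\<bar>"
proof -
  have main: "\<bar>exp a - exp b\<bar> \<le> exp B * \<bar>a - b\<bar>" if "a \<le> b" "b \<le> B" for a b :: real
  proof -
    have h: "exp (a - b) \<ge> 1 + (a - b)" by (rule exp_ge_add_one_self)
    have "exp b * (1 - exp (a - b)) \<le> exp b * (b - a)"
      by (rule mult_left_mono) (use h in linarith, simp)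
    then have "exp b - exp a \<le> exp b * (b - a)" by (simp add: exp_diff algebra_simps)
    also have "\<dots> \<le> exp B * (b - a)" using that by (intro mult_right_mono) auto
    finally show ?thesis using that by simp
  qed
  show ?thesis
  proof (cases "a \<le> b")
    case True then show ?thesis using main assms by auto
  next
    case False then show ?thesis using main[of b a] assms by (simp add: abs_minus_commute)
  qed
qed

locale nsetup =
  fixes X' :: "(real^'n) set" and eps :: real and m :: "real^'n" and G :: "real^'n \<Rightarrow> real^'n"
  assumes X'ne: "X' \<noteq> {}" and X'c: "compact X'" and epos: "0 < eps"
    and G: "\<And>x. infdist x X' \<le> eps \<Longrightarrow> G x = (1/eps) *\<^sub>R (x - m)"
begin

abbreviation "XX \<equiv> {x. infdist x X' \<le> eps}"

lemma near: assumes "x \<in> XX" obtains y where "y \<in> X'" "dist x y \<le> eps"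
proof -
  obtain y where "y \<in> X'" "infdist x X' = dist x y"
    using infdist_attains_inf[OF compact_imp_closed[OF X'c] X'ne] by metis
  then show ?thesis using that assms by auto
qed

lemma inXX: "y \<in> X' \<Longrightarrow> dist z y \<le> eps \<Longrightarrow> z \<in> XX"
  using infdist_le[of y X' z] by auto

lemma compact_XX: "compact XX"
proof -
  have cl: "closed XX"
    by (rule closed_Collect_le) (auto intro: continuous_intros)
  obtain r where r: "\<forall>y\<in>X'. norm y \<le> r"
    using compact_imp_bounded[OF X'c] by (auto simp: bounded_iff)
  have "\<forall>x\<in>XX. norm x \<le> r + eps"
  proof
    fix x assume "x \<in> XX"
    then obtain y where "y \<in> X'" "dist x y \<le> eps" by (rule near)
    then show "norm x \<le> r + eps" using r norm_triangle_ineq[of y "x - y"]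
      by (auto simp: dist_norm)
  qed
  then have "bounded XX" by (auto simp: bounded_iff)
  then show ?thesis using cl by (simp add: compact_eq_bounded_closed)
qed

lemma realz_pair:
  assumes z: "z \<in> XX" and x2: "x2 \<in> XX" and ne: "z \<noteq> x2"
  shows "realz XX G (\<lambda>x. relu ((x2 - z) \<bullet> (x - z)))"
proof -
  define n where "n = norm (x2 - z)"
  have npos: "n > 0" using ne by (simp add: n_def)
  have dG: "G x - G z = (1/eps) *\<^sub>R (x - z)" if "x \<in> XX" for x
    using G[of x] G[of z] that z by (simp add: scaleR_diff_right)
  define v where "v = (1 / (norm (G x2 - G z))\<^sup>2) *\<^sub>R (G x2 - G z)"
  define \<beta> where "\<beta> = v \<bullet> G z"
  have Gne: "G z \<noteq> G x2" using dG[OF x2] ne epos by auto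
  have "neur XX G v \<beta>" unfolding neur_def sampled_neuron_def
    using z x2 Gne v_def \<beta>_def by blast
  then have r: "realz XX G (\<lambda>x. n\<^sup>2 * relu (v \<bullet> G x - \<beta>))"
    by (intro realz_scale realz_neur)
  show ?thesis
  proof (rule realz_cong[OF r])
    fix x assume x: "x \<in> XX"
    have nG: "norm (G x2 - G z) = n / eps" using dG[OF x2] epos by (simp add: n_def)
    have "v \<bullet> G x - \<beta> = v \<bullet> (G x - G z)" by (simp add: \<beta>_def inner_diff_right)
    also have "\<dots> = ((x2 - z) \<bullet> (x - z)) / n\<^sup>2"
    proof -
      have "v = (eps\<^sup>2 / n\<^sup>2) *\<^sub>R (G x2 - G z)" unfolding v_def nG using epos by (simp add: power_divide)
      then have "v = (eps\<^sup>2 / n\<^sup>2) *\<^sub>R ((1/eps) *\<^sub>R (x2 - z))" using dG[OF x2] by simp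
      then have "v \<bullet> (G x - G z) = (eps\<^sup>2 / n\<^sup>2) * (1/eps) * (1/eps) * ((x2 - z) \<bullet> (x - z))"
        using dG[OF x] by simp
      then show ?thesis using epos npos by (simp add: power2_eq_square)
    qed
    finally have "v \<bullet> G x - \<beta> = (1 / n\<^sup>2) * ((x2 - z) \<bullet> (x - z))" by simp
    moreover have "relu ((1 / n\<^sup>2) * ((x2 - z) \<bullet> (x - z))) = (1 / n\<^sup>2) * relu ((x2 - z) \<bullet> (x - z))"
      by (intro relu_scale) simp
    ultimately show "n\<^sup>2 * relu (v \<bullet> G x - \<beta>) = relu ((x2 - z) \<bullet> (x - z))"
      using npos by simp
  qed
qed

lemma shift_pt:
  assumes "y \<in> X'" "\<bar>s\<bar> \<le> eps" "v \<noteq> 0"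
  shows "y + (s / norm v) *\<^sub>R v \<in> XX" "v \<bullet> (y + (s / norm v) *\<^sub>R v) = v \<bullet> y + s * norm v"
proof -
  show "y + (s / norm v) *\<^sub>R v \<in> XX"
    using assms by (intro inXX[of y]) (auto simp: dist_norm)
  show "v \<bullet> (y + (s / norm v) *\<^sub>R v) = v \<bullet> y + s * norm v"
    using assms by (simp add: inner_add_right dot_square_norm power2_eq_square)
qed

lemma realz_ridge:
  assumes v: "v \<noteq> 0" and y: "y \<in> X'" and s: "-eps \<le> s" "s < eps"
  shows "realz XX G (\<lambda>x. relu (v \<bullet> x - (v \<bullet> y + s * norm v)))"
proof -
  define z where "z = y + (s / norm v) *\<^sub>R v"
  define x2 where "x2 = y + (eps / norm v) *\<^sub>R v"
  have z: "z \<in> XX" "v \<bullet> z = v \<bullet> y + s * norm v" using shift_pt[OF y _ v, of s] s unfolding z_def by auto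
  have x2: "x2 \<in> XX" using shift_pt[OF y _ v, of eps] epos unfolding x2_def by auto
  have diff: "x2 - z = ((eps - s) / norm v) *\<^sub>R v"
    unfolding x2_def z_def by (simp add: algebra_simps diff_divide_distrib)
  have ne: "z \<noteq> x2" using diff s v by auto
  have r: "realz XX G (\<lambda>x. (norm v / (eps - s)) * relu ((x2 - z) \<bullet> (x - z)))"
    by (intro realz_scale realz_pair z x2 ne)
  show ?thesis
  proof (rule realz_cong[OF r])
    fix x
    have "(x2 - z) \<bullet> (x - z) = ((eps - s) / norm v) * (v \<bullet> x - (v \<bullet> y + s * norm v))"
      unfolding diff using z(2) by (simp add: inner_diff_right right_diff_distrib)
    moreover have "relu (((eps - s) / norm v) * (v \<bullet> x - (v \<bullet> y + s * norm v))) =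
        ((eps - s) / norm v) * relu (v \<bullet> x - (v \<bullet> y + s * norm v))"
      using s by (intro relu_scale) simp
    ultimately show "(norm v / (eps - s)) * relu ((x2 - z) \<bullet> (x - z)) = relu (v \<bullet> x - (v \<bullet> y + s * norm v))"
      using s v by simp
  qed
qed

lemma realz_plist:
  assumes "\<forall>u\<in>set (map snd ps). realz XX G (\<lambda>x. relu (v \<bullet> x - u))"
  shows "realz XX G (\<lambda>x. sum_list (map (\<lambda>(a,u). a * relu (v \<bullet> x - u)) ps))"
  using assms
proof (induction ps)
  case Nil then show ?case using realz_const[of XX G "0::real"] by simp
next
  case (Cons p ps)
  obtain a u where p: "p = (a,u)" by fastforce
  have "realz XX G (\<lambda>x. a * relu (v \<bullet> x - u) + sum_list (map (\<lambda>(a,u). a * relu (v \<bullet> x - u)) ps))"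
    using Cons p by (intro realz_add realz_scale) auto
  then show ?case using p by simp
qed

end

context nsetup begin

lemma XXne: "XX \<noteq> {}"
proof -
  obtain y where "y \<in> X'" using X'ne by auto
  then have "y \<in> XX" using epos by (intro inXX) auto
  then show ?thesis by auto
qed

lemma approx_exp: "approx XX G (\<lambda>x. exp (v \<bullet> x))"
proof (cases "v = 0")
  case True
  then show ?thesis using approx_realz[OF realz_const[of XX G "1::real"]] by simp
next
  case v: False
  define A where "A = {v \<bullet> y + s * norm v | y s. y \<in> X' \<and> -eps \<le> s \<and> s < eps}"
  define K where "K = (\<lambda>x. v \<bullet> x) ` XX"
  have cK: "compact K" unfolding K_def
    by (intro compact_continuous_image compact_XX) (auto intro: continuous_intros)
  have Kne: "K \<noteq> {}" using XXne K_def by auto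
  obtain B where B: "\<forall>k\<in>K. \<bar>k\<bar> \<le> B" using compact_imp_bounded[OF cK] by (auto simp: bounded_real)
  have AK: "A \<subseteq> K"
  proof
    fix t assume "t \<in> A"
    then obtain y s where ys: "t = v \<bullet> y + s * norm v" "y \<in> X'" "-eps \<le> s" "s < eps" unfolding A_def by blast
    then have "\<bar>s\<bar> \<le> eps" by auto
    then show "t \<in> K" using shift_pt[OF ys(2) _ v] ys(1) unfolding K_def by (metis image_eqI)
  qed
  have realzA: "realz XX G (\<lambda>x. relu (v \<bullet> x - t))" if "t \<in> A" for t
    using that realz_ridge[OF v] unfolding A_def by blast
  define M where "M = exp B"
  have Mpos: "M > 0" by (simp add: M_def)
  show ?thesis unfolding approx_def
  proof (intro allI impI)
    fix e :: real assume e: "e > 0"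
    define h where "h = e / (2 * M)"
    have hpos: "h > 0" using e Mpos by (simp add: h_def)
    have cover: "K \<subseteq> (\<Union>a\<in>A. ball a h)"
    proof
      fix k assume "k \<in> K"
      then obtain x where x: "x \<in> XX" "k = v \<bullet> x" unfolding K_def by auto
      obtain y where y: "y \<in> X'" "dist x y \<le> eps" using near[OF x(1)] by blast
      define s0 where "s0 = (v \<bullet> x - v \<bullet> y) / norm v"
      have "\<bar>v \<bullet> (x - y)\<bar> \<le> norm v * norm (x - y)" by (rule Cauchy_Schwarz_ineq2)
      then have "\<bar>s0\<bar> \<le> norm (x - y)" using v by (simp add: s0_def inner_diff_right divide_le_eq abs_divide mult.commute)
      then have s0: "\<bar>s0\<bar> \<le> eps" using y by (simp add: dist_norm)
      define \<delta> where "\<delta> = min (h / (2 * norm v)) eps"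
      have nv: "norm v > 0" using v by simp
      have \<delta>1: "\<delta> > 0" using hpos epos nv by (simp add: \<delta>_def)
      have \<delta>2: "\<delta> \<le> eps" by (simp add: \<delta>_def)
      have "\<delta> \<le> h / (2 * norm v)" by (simp add: \<delta>_def)
      then have "\<delta> * norm v \<le> h / (2 * norm v) * norm v" using nv by (intro mult_right_mono) auto
      then have \<delta>3: "\<delta> * norm v \<le> h / 2" using nv by simp
      note \<delta> = \<delta>1 \<delta>2 \<delta>3
      define s where "s = (if s0 < eps then s0 else s0 - \<delta>)"
      have s: "-eps \<le> s" "s < eps" "\<bar>s0 - s\<bar> \<le> \<delta>" using s0 \<delta> by (auto simp: s_def)
      have kk: "k = v \<bullet> y + s0 * norm v" using v x(2) by (simp add: s0_def inner_diff_right)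
      have "v \<bullet> y + s * norm v \<in> A" unfolding A_def using y(1) s by blast
      moreover have "\<bar>k - (v \<bullet> y + s * norm v)\<bar> < h"
      proof -
        have "k - (v \<bullet> y + s * norm v) = (s0 - s) * norm v" unfolding kk
          by (simp add: algebra_simps)
        then have "\<bar>k - (v \<bullet> y + s * norm v)\<bar> = \<bar>s0 - s\<bar> * norm v"
          by (simp add: abs_mult)
        also have "\<dots> \<le> \<delta> * norm v" using s(3) by (simp add: mult_right_mono)
        finally show ?thesis using \<delta>(3) hpos by linarith
      qed
      ultimately show "k \<in> (\<Union>a\<in>A. ball a h)" by (auto simp: dist_real_def abs_minus_commute)
    qed
    obtain C where C: "C \<subseteq> A" "finite C" "K \<subseteq> (\<Union>a\<in>C. ball a h)"
      by (rule compactE_image[OF cK _ cover]) auto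
    have Cne: "C \<noteq> {}" using C(3) Kne by auto
    define ts where "ts = sorted_list_of_set C"
    have ts: "sorted_wrt (<) ts" "set ts = C" "ts \<noteq> []"
      using C(2) Cne by (auto simp: ts_def strict_sorted_list_of_set)
    have CK: "C \<subseteq> K" using C(1) AK by auto
    have lip: "\<forall>a\<in>set ts. \<forall>b\<in>set ts. \<bar>exp a - exp b\<bar> \<le> M * \<bar>a - b\<bar>"
    proof (intro ballI)
      fix a b assume ab: "a \<in> set ts" "b \<in> set ts"
      then have "\<bar>a\<bar> \<le> B" "\<bar>b\<bar> \<le> B" using ts(2) CK B by auto
      then show "\<bar>exp a - exp b\<bar> \<le> M * \<bar>a - b\<bar>" unfolding M_def by (intro exp_lip) auto
    qed
    obtain P where P: "plin C P" "\<forall>t\<in>C. P t = exp t" "\<forall>s r. \<bar>P s - P r\<bar> \<le> M * \<bar>s - r\<bar>"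
      using pl_interp[OF ts(1) ts(3) less_imp_le[OF Mpos] lip] ts(2) by blast
    obtain ps c where ps: "set (map snd ps) \<subseteq> C" "P = (\<lambda>s. c + sum_list (map (\<lambda>(a,u). a * relu (s - u)) ps))"
      using P(1) unfolding plin_def by blast
    have rH: "realz XX G (\<lambda>x. P (v \<bullet> x))"
    proof -
      have "realz XX G (\<lambda>x. c + sum_list (map (\<lambda>(a,u). a * relu (v \<bullet> x - u)) ps))"
        using ps(1) C(1) realzA by (intro realz_add realz_const realz_plist) auto
      then show ?thesis using ps(2) by simp
    qed
    have err: "\<bar>exp (v \<bullet> x) - P (v \<bullet> x)\<bar> < e" if x: "x \<in> XX" for x
    proof -
      have "v \<bullet> x \<in> K" using x unfolding K_def by auto
      then obtain t where t: "t \<in> C" "dist t (v \<bullet> x) < h" using C(3) by auto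
      have "\<bar>exp (v \<bullet> x) - P (v \<bullet> x)\<bar> \<le> \<bar>exp (v \<bullet> x) - exp t\<bar> + \<bar>P t - P (v \<bullet> x)\<bar>"
        using P(2) t(1) by simp
      also have "\<dots> \<le> M * \<bar>v \<bullet> x - t\<bar> + M * \<bar>t - v \<bullet> x\<bar>"
      proof (rule add_mono)
        show "\<bar>exp (v \<bullet> x) - exp t\<bar> \<le> M * \<bar>v \<bullet> x - t\<bar>"
          unfolding M_def using B \<open>v \<bullet> x \<in> K\<close> CK t(1) by (intro exp_lip) (auto simp: abs_le_iff)
        show "\<bar>P t - P (v \<bullet> x)\<bar> \<le> M * \<bar>t - v \<bullet> x\<bar>" using P(3) by blast
      qed
      also have "\<dots> = 2 * M * \<bar>t - v \<bullet> x\<bar>" by (simp add: abs_minus_commute)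
      also have "\<dots> < 2 * M * h" using t(2) Mpos by (simp add: dist_real_def)
      also have "\<dots> = e" using Mpos by (simp add: h_def)
      finally show ?thesis .
    qed
    show "\<exists>H. realz XX G H \<and> (\<forall>x\<in>XX. \<bar>exp (v \<bullet> x) - H x\<bar> < e)"
      using rH err by blast
  qed
qed

end

definition expsum :: "(real \<times> (real^'n)) list \<Rightarrow> real^'n \<Rightarrow> real" where
  "expsum ps x = sum_list (map (\<lambda>(c,u). c * exp (u \<bullet> x)) ps)"

lemma expsum_Nil[simp]: "expsum [] x = 0" by (simp add: expsum_def)
lemma expsum_Cons[simp]: "expsum ((c,u) # ps) x = c * exp (u \<bullet> x) + expsum ps x"
  by (simp add: expsum_def)
lemma expsum_append: "expsum (ps @ qs) x = expsum ps x + expsum qs x"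
  by (simp add: expsum_def)

lemma expsum_mult1: "expsum (map (\<lambda>(d,w). (c*d, u+w)) qs) x = c * exp (u \<bullet> x) * expsum qs x"
  by (induction qs) (auto simp: inner_add_left exp_add algebra_simps)

lemma expsum_mult: "expsum ps x * expsum qs x =
    expsum (concat (map (\<lambda>(c,u). map (\<lambda>(d,w). (c*d, u+w)) qs) ps)) x"
proof (induction ps)
  case Nil then show ?case by simp
next
  case (Cons p ps)
  obtain c u where p: "p = (c,u)" by fastforce
  have "expsum (p # ps) x * expsum qs x = c * exp (u \<bullet> x) * expsum qs x + expsum ps x * expsum qs x"
    by (simp add: p distrib_right)
  then show ?case using Cons by (simp add: p expsum_append expsum_mult1)
qed

lemma expsum_cont: "continuous_on S (expsum ps)"
proof (induction ps)
  case Nil then show ?case by (simp add: expsum_def)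
next
  case (Cons p ps)
  obtain c u where p: "p = (c,u)" by fastforce
  have "continuous_on S (\<lambda>x. c * exp (u \<bullet> x) + expsum ps x)"
    using Cons by (intro continuous_intros)
  then show ?case by (simp add: p)
qed

context nsetup begin

lemma approx_expsum: "approx XX G (expsum ps)"
proof (induction ps)
  case Nil then show ?case using approx_realz[OF realz_const[of XX G "0::real"]] by simp
next
  case (Cons p ps)
  obtain c u where p: "p = (c,u)" by fastforce
  have "approx XX G (\<lambda>x. c * exp (u \<bullet> x) + expsum ps x)"
    using Cons by (intro approx_add approx_scale approx_exp)
  then show ?case by (simp add: p)
qed

lemma approx_cont:
  assumes "continuous_on XX f"
  shows "approx XX G f"
proof -
  interpret FR: function_ring_on "{expsum ps | ps. True}" XX
  proof unfold_locales
    show "compact XX" by (rule compact_XX)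
  next
    fix f :: "real^'n \<Rightarrow> real" assume "f \<in> {expsum ps | ps. True}"
    then show "continuous_on XX f" using expsum_cont by auto
  next
    fix f g :: "real^'n \<Rightarrow> real" assume "f \<in> {expsum ps | ps. True}" "g \<in> {expsum ps | ps. True}"
    then obtain ps qs where "f = expsum ps" "g = expsum qs" by auto
    then show "(\<lambda>x. f x + g x) \<in> {expsum ps | ps. True}"
      by (intro CollectI exI[of _ "ps @ qs"]) (auto simp: expsum_append)
  next
    fix f g :: "real^'n \<Rightarrow> real" assume "f \<in> {expsum ps | ps. True}" "g \<in> {expsum ps | ps. True}"
    then obtain ps qs where "f = expsum ps" "g = expsum qs" by auto
    then show "(\<lambda>x. f x * g x) \<in> {expsum ps | ps. True}"
      by (intro CollectI exI[of _ "concat (map (\<lambda>(c,u). map (\<lambda>(d,w). (c*d, u+w)) qs) ps)"])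
         (auto simp: expsum_mult)
  next
    fix c :: real
    show "(\<lambda>_. c) \<in> {expsum ps | ps. True}"
      by (intro CollectI exI[of _ "[(c, 0)]"]) auto
  next
    fix x y :: "real^'n" assume "x \<noteq> y"
    then obtain i where i: "x $ i \<noteq> y $ i" by (auto simp: vec_eq_iff)
    have "expsum [(1, axis i 1)] x \<noteq> expsum [(1, axis i 1)] y"
      using i by (simp add: inner_axis')
    then show "\<exists>f\<in>{expsum ps | ps. True}. f x \<noteq> f y" by blast
  qed
  show ?thesis unfolding approx_def
  proof (intro allI impI)
    fix e :: real assume e: "e > 0"
    obtain g where g: "g \<in> {expsum ps | ps. True}" "\<forall>x\<in>XX. \<bar>f x - g x\<bar> < e/2"
      using FR.Stone_Weierstrass_basic[OF assms, of "e/2"] e by auto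
    obtain H where H: "realz XX G H" "\<forall>x\<in>XX. \<bar>g x - H x\<bar> < e/2"
    proof -
      have "approx XX G g" using g(1) approx_expsum by auto
      then show ?thesis using that e unfolding approx_def by (meson half_gt_zero)
    qed
    have "\<forall>x\<in>XX. \<bar>f x - H x\<bar> < e"
    proof
      fix x assume "x \<in> XX"
      then have "\<bar>f x - g x\<bar> < e/2" "\<bar>g x - H x\<bar> < e/2" using g H by auto
      then show "\<bar>f x - H x\<bar> < e" by linarith
    qed
    then show "\<exists>H. realz XX G H \<and> (\<forall>x\<in>XX. \<bar>f x - H x\<bar> < e)" using H by blast
  qed
qed

end

context nsetup begin

lemma neur_ex: "\<exists>v \<beta>. neur XX G v \<beta>"
proof -
  obtain y where y: "y \<in> X'" using X'ne by auto
  fix k :: 'n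
  define x2 where "x2 = y + eps *\<^sub>R axis k 1"
  have y1: "y \<in> XX" using y epos by (intro inXX) auto
  have y2: "x2 \<in> XX" using y epos by (intro inXX[of y]) (auto simp: x2_def dist_norm)
  have "G x2 - G y = (1/eps) *\<^sub>R (y + eps *\<^sub>R axis k 1) - (1/eps) *\<^sub>R y"
    using G y1 y2 by (simp add: x2_def scaleR_diff_right)
  also have "\<dots> = axis k 1" using epos by (simp add: scaleR_add_right)
  finally have "G x2 - G y = axis k 1" .
  then have "G y \<noteq> G x2" by (metis axis_nth diff_self zero_index zero_neq_one)
  then show ?thesis unfolding neur_def sampled_neuron_def using y1 y2 by blast
qed

lemma approx_vec:
  fixes f :: "real^'n \<Rightarrow> real^'m"
  assumes "continuous_on XX f" "e > 0"
  shows "\<exists>F. realz XX G F \<and> (\<forall>x\<in>XX. norm (f x - F x) < e)"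
proof -
  define e' where "e' = e / real CARD('m)"
  have e': "e' > 0" using assms(2) by (simp add: e'_def)
  have "\<forall>j. \<exists>H. realz XX G H \<and> (\<forall>x\<in>XX. \<bar>f x $ j - H x\<bar> < e')"
  proof
    fix j
    have "approx XX G (\<lambda>x. f x $ j)" by (intro approx_cont continuous_on_component assms(1))
    then show "\<exists>H. realz XX G H \<and> (\<forall>x\<in>XX. \<bar>f x $ j - H x\<bar> < e')" using e' unfolding approx_def by blast
  qed
  then obtain H where H: "\<And>j. realz XX G (H j)" "\<And>j x. x \<in> XX \<Longrightarrow> \<bar>f x $ j - H j x\<bar> < e'"
    by metis
  define F where "F x = (\<Sum>j\<in>UNIV. H j x *\<^sub>R (axis j 1 :: real^'m))" for x
  have rF: "realz XX G F" unfolding F_def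
  proof (intro realz_sum)
    fix j :: 'm
    have lin: "linear (\<lambda>r::real. r *\<^sub>R (axis j 1 :: real^'m))"
      by (rule bounded_linear.linear[OF bounded_linear_scaleR_left])
    show "realz XX G (\<lambda>x. H j x *\<^sub>R (axis j 1 :: real^'m))"
      by (rule realz_lin[OF lin H(1)])
  qed simp
  have "norm (f x - F x) < e" if x: "x \<in> XX" for x
  proof -
    have fx: "f x = (\<Sum>j\<in>UNIV. (f x $ j) *\<^sub>R (axis j 1 :: real^'m))"
      using basis_expansion[of "f x"] by (simp add: scalar_mult_eq_scaleR)
    have "f x - F x = (\<Sum>j\<in>UNIV. (f x $ j - H j x) *\<^sub>R (axis j 1 :: real^'m))"
      unfolding F_def by (subst fx) (simp add: sum_subtractf scaleR_diff_left)
    then have "norm (f x - F x) \<le> (\<Sum>j\<in>UNIV. norm ((f x $ j - H j x) *\<^sub>R (axis j 1 :: real^'m)))"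
      by (simp only:) (rule norm_sum)
    also have "\<dots> = (\<Sum>j\<in>UNIV. \<bar>f x $ j - H j x\<bar>)" by simp
    also have "\<dots> < (\<Sum>j\<in>(UNIV::'m set). e')"
      using H(2)[OF x] by (intro sum_strict_mono) auto
    also have "\<dots> = e" by (simp add: e'_def)
    finally show ?thesis .
  qed
  then show ?thesis using rF by blast
qed

end

theorem lemma5:
  fixes X' :: "(real^'n) set" and epsI :: real and L :: nat
    and f :: "real^'n \<Rightarrow> real^'m"
  assumes "X' \<noteq> {}" and "compact X'" and "reach X' > 0"
    and "0 < epsI" and "ereal epsI < reach X'" and "epsI < 1"
    and "L > 1"
    and "continuous_on {x. infdist x X' \<le> epsI} f"
    and "e > 0"
  shows "\<exists>NL>0. \<exists>w b wL bL c d.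
           sampled_net {x. infdist x X' \<le> epsI} L w b NL wL bL \<and>
           (\<forall>x\<in>{x. infdist x X' \<le> epsI}. norm (f x - net L w b NL wL bL c d x) < e)"
proof -
  let ?X = "{x. infdist x X' \<le> epsI}"
  have "\<forall>i. \<exists>y\<in>X'. \<forall>z\<in>X'. y $ i \<le> z $ i"
  proof
    fix i
    show "\<exists>y\<in>X'. \<forall>z\<in>X'. y $ i \<le> z $ i"
      by (rule continuous_attains_inf[OF assms(2) assms(1)]) (auto intro: continuous_intros)
  qed
  then obtain Y where Y: "\<And>i. Y i \<in> X'" "\<And>i z. z \<in> X' \<Longrightarrow> Y i $ i \<le> z $ i" by metis
  define m :: "real^'n" where "m = (\<chi> i. Y i $ i - epsI)"
  define w :: "nat \<Rightarrow> 'n \<Rightarrow> real^'n" where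
    "w l i = (if l = 1 then (1/epsI) *\<^sub>R axis i 1 else axis i 1)" for l i
  define b :: "nat \<Rightarrow> 'n \<Rightarrow> real" where
    "b l i = (if l = 1 then m $ i / epsI else 0)" for l i
  have ep: "epsI > 0" by fact
  have lowb: "m $ i \<le> x $ i" if "x \<in> ?X" for x i
  proof -
    obtain y where y: "y \<in> X'" "infdist x X' = dist x y"
      using infdist_attains_inf[OF compact_imp_closed[OF assms(2)] assms(1)] by metis
    have "\<bar>x $ i - y $ i\<bar> \<le> norm (x - y)"
      using component_le_norm_cart[of "x - y" i] by simp
    then show ?thesis using y that Y(2)[OF y(1), of i] by (auto simp: m_def dist_norm)
  qed
  have hid: "hidden w b k x = (1/epsI) *\<^sub>R (x - m)" if "x \<in> ?X" "k \<ge> 1" for x k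
    using that(2)
  proof (induction k)
    case 0 then show ?case by simp
  next
    case (Suc k)
    show ?case
    proof (cases "k = 0")
      case True
      have "hidden w b (Suc k) x = (\<chi> i. relu ((x $ i - m $ i) / epsI))"
        using True ep by (simp add: w_def b_def inner_axis' diff_divide_distrib)
      also have "\<dots> = (1/epsI) *\<^sub>R (x - m)"
        using lowb[OF that(1)] ep by (simp add: vec_eq_iff relu_def)
      finally show ?thesis .
    next
      case False
      then have IH: "hidden w b k x = (1/epsI) *\<^sub>R (x - m)" using Suc by simp
      have "hidden w b (Suc k) x = (\<chi> i. relu ((x $ i - m $ i) / epsI))"
        using False IH by (simp add: w_def b_def inner_axis' diff_divide_distrib)
      also have "\<dots> = (1/epsI) *\<^sub>R (x - m)"
        using lowb[OF that(1)] ep by (simp add: vec_eq_iff relu_def)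
      finally show ?thesis .
    qed
  qed
  define G where "G = hidden w b (L - 1)"
  interpret NS: nsetup X' epsI m G
    by unfold_locales (use assms(1,2) ep hid assms(7) in \<open>auto simp: G_def\<close>)
  have part1: "\<forall>l\<in>{1..<L}. \<forall>i. \<exists>x1\<in>?X. \<exists>x2\<in>?X.
        sampled_neuron (hidden w b (l - 1) x1) (hidden w b (l - 1) x2) (w l i) (b l i)"
  proof (intro ballI allI)
    fix l i assume l: "l \<in> {1..<L}"
    define x1 where "x1 = Y i - epsI *\<^sub>R axis i 1"
    have x2X: "Y i \<in> ?X" using Y(1)[of i] ep by (intro NS.inXX[of "Y i"]) auto
    have x1X: "x1 \<in> ?X" using Y(1) ep by (intro NS.inXX[of "Y i"]) (auto simp: x1_def dist_norm)
    have d: "Y i - x1 = epsI *\<^sub>R axis i 1" by (simp add: x1_def)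
    have x1i: "x1 $ i = m $ i" by (simp add: x1_def m_def)
    have "(Y i - x1) $ i = epsI" using d by simp
    then have ne: "x1 \<noteq> Y i" using ep by auto
    have sn: "sampled_neuron (hidden w b (l - 1) x1) (hidden w b (l - 1) (Y i)) (w l i) (b l i)"
      proof (cases "l = 1")
        case True
        have nd: "norm (Y i - x1) = epsI" using d ep by simp
        have v: "(1 / (norm (Y i - x1))\<^sup>2) *\<^sub>R (Y i - x1) = (1/epsI) *\<^sub>R axis i 1"
          unfolding nd d using ep by (simp add: power2_eq_square)
        have bb: "m $ i / epsI = ((1/epsI) *\<^sub>R axis i 1) \<bullet> x1"
          using x1i by (simp add: inner_axis')
        have l0: "l - 1 = 0" using True by simp
        have h0: "hidden w b (l - 1) z = z" for z unfolding l0 by (rule hidden.simps(1))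
        have wl: "w l i = (1/epsI) *\<^sub>R axis i 1" unfolding w_def True by simp
        have bl: "b l i = m $ i / epsI" unfolding b_def True by simp
        show ?thesis unfolding sampled_neuron_def h0 wl bl
          by (rule conjI[OF ne conjI[OF v[symmetric] bb]])
      next
        case False
        then have l1: "l - 1 \<ge> 1" using l by auto
        let ?p = "hidden w b (l - 1) x1" and ?q = "hidden w b (l - 1) (Y i)"
        have "?q - ?p = (1/epsI) *\<^sub>R ((Y i - m) - (x1 - m))"
          unfolding hid[OF x1X l1] hid[OF x2X l1] by (simp only: scaleR_diff_right)
        also have "\<dots> = (1/epsI) *\<^sub>R (Y i - x1)" by simp
        also have "\<dots> = axis i 1" unfolding d using ep by simp
        finally have hd: "?q - ?p = axis i 1" .
        have neq: "?p \<noteq> ?q"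
        proof
          assume "?p = ?q"
          then have "(axis i 1 :: real^'n) = 0" using hd by simp
          then show False by (metis axis_nth zero_index zero_neq_one)
        qed
        have v: "(1 / (norm (?q - ?p))\<^sup>2) *\<^sub>R (?q - ?p) = axis i 1"
          unfolding hd by simp
        have b0: "axis i 1 \<bullet> ?p = 0"
          unfolding hid[OF x1X l1] using x1i by (simp add: inner_axis')
        have wl: "w l i = axis i 1" unfolding w_def using False by simp
        have bl: "b l i = 0" unfolding b_def using False by simp
        show ?thesis unfolding sampled_neuron_def wl bl
          by (rule conjI[OF neq conjI[OF v[symmetric] b0[symmetric]]])
      qed
    then show "\<exists>x1\<in>?X. \<exists>x2\<in>?X.
        sampled_neuron (hidden w b (l - 1) x1) (hidden w b (l - 1) x2) (w l i) (b l i)"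
      using x1X x2X by blast
  qed
  obtain F where F: "realz ?X G F" "\<forall>x\<in>?X. norm (f x - F x) < e"
    using NS.approx_vec[OF assms(8) assms(9)] by blast
  obtain N V B C d where nd: "\<forall>i<N. neur ?X G (V i) (B i)" and FN: "\<forall>x\<in>?X. F x = netfun G N V B C d x"
    using F(1) unfolding realz_def by blast
  obtain v0 \<beta>0 where n0: "neur ?X G v0 \<beta>0" using NS.neur_ex by blast
  define N' where "N' = (if N = 0 then 1 else N)"
  define V' where "V' = (if N = 0 then (\<lambda>_. v0) else V)"
  define B' where "B' = (if N = 0 then (\<lambda>_. \<beta>0) else B)"
  define C' where "C' = (if N = 0 then (\<lambda>_. 0) else C)"
  have N'pos: "N' > 0" by (simp add: N'_def)
  have nd': "\<forall>i<N'. neur ?X G (V' i) (B' i)" using nd n0 by (simp add: N'_def V'_def B'_def)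
  have eqn: "netfun G N' V' B' C' d x = netfun G N V B C d x" for x
    by (simp add: netfun_def N'_def V'_def B'_def C'_def)
  have p2: "\<forall>i<N'. \<exists>x1\<in>?X. \<exists>x2\<in>?X. sampled_neuron (hidden w b (L - 1) x1) (hidden w b (L - 1) x2) (V' i) (B' i)"
    using nd' unfolding neur_def G_def by blast
  have "sampled_net ?X L w b N' V' B'"
    unfolding sampled_net_def by (intro conjI part1 p2)
  moreover have "\<forall>x\<in>?X. norm (f x - net L w b N' V' B' C' d x) < e"
  proof
    fix x assume x: "x \<in> ?X"
    have "net L w b N' V' B' C' d x = netfun G N' V' B' C' d x"
      unfolding net_def netfun_def G_def by (rule refl)
    also have "\<dots> = F x" using eqn FN x by metis
    finally show "norm (f x - net L w b N' V' B' C' d x) < e"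
      using F(2) x by metis
  qed
  ultimately show ?thesis using N'pos by blast
qed


end
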